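(* Under the standing setup, define $$Y^{1+}_{MOB}=\frac{\mathbb E[\min\{Y_N-\underline Y(1-X_N),\,\overline Y X_N\}]}{\mathbb E[X]},\qquad Y^{0-}_{MOB}=\frac{\mathbb E[\max\{Y_N-\overline Y X_N,\,\underline Y(1-X_N)\}]}{1-\mathbb E[X]},$$ $$Y^{1-}_{MOB}=\frac{\mathbb E[\max\{Y_N-\overline Y(1-X_N),\,\underline Y X_N\}]}{\mathbb E[X]},\qquad Y^{0+}_{MOB}=\frac{\mathbb E[\min\{Y_N-\underline Y X_N,\,\overline Y(1-X_N)\}]}{1-\mathbb E[X]}.$$ Then $Y^1\in[Y^{1-}_{MOB},Y^{1+}_{MOB}]$ and $Y^0\in[Y^{0-}_{MOB},Y^{0+}_{MOB}]$, and these bounds are sharp (absent additional information).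
   Context: Let $(X,Y,N)$ be a random triple with $X\in\{0,1\}$, $Y$ real-valued, $N$ taking values in a finite set $\mathcal N$. Write $p_n=\Pr(N=n)$, $X_n=\mathbb E[X\mid N=n]$, $Y_n=\mathbb E[Y\mid N=n]$, and $X_N=\mathbb E[X\mid N]$, $Y_N=\mathbb E[Y\mid N]$; expectations of functions of $(X_N,Y_N)$ are sums over $n$ weighted by $p_n$. Assume some $n$ has $p_n>0$ and $X_n\in(0,1)$. Fix reals $\underline Y\le\overline Y$ and assume $\mathbb E[Y\mid X=x,N=n]\in[\underline Y,\overline Y]$ whenever $\Pr(X=x,N=n)>0$ (standing bound). $Y^x=\mathbb E[Y\mid X=x]$. The observed data are $(p_n,X_n,Y_n)_{n\in\mathcal N}$. Sharpness: an interval is a sharp bound for a parameter if the parameter lies in it for every joint distribution satisfying the standing assumptions, and for every value $v$ in the interval there is a joint distribution of $(X,Y,N)$ with the same observed $(p_n,X_n,Y_n)_n$, satisfying the standing bound, for which the parameter equals $v$. *)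

theory Defs
  imports "HOL-Probability.Probability"
begin

definition joint_space :: "(bool \<times> real \<times> 'n) measure" where
  "joint_space = count_space UNIV \<Otimes>\<^sub>M (borel \<Otimes>\<^sub>M count_space UNIV)"

definition Xv :: "bool \<times> real \<times> 'n \<Rightarrow> bool" where "Xv w = fst w"
definition Yv :: "bool \<times> real \<times> 'n \<Rightarrow> real" where "Yv w = fst (snd w)"
definition Nv :: "bool \<times> real \<times> 'n \<Rightarrow> 'n" where "Nv w = snd (snd w)"

definition pN :: "(bool \<times> real \<times> 'n) measure \<Rightarrow> 'n \<Rightarrow> real" where
  "pN D n = measure D {w \<in> space D. Nv w = n}"

definition XN :: "(bool \<times> real \<times> 'n) measure \<Rightarrow> 'n \<Rightarrow> real" where
  "XN D n = measure D {w \<in> space D. Xv w \<and> Nv w = n} / pN D n"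

definition YN :: "(bool \<times> real \<times> 'n) measure \<Rightarrow> 'n \<Rightarrow> real" where
  "YN D n = (\<integral>w. Yv w * indicator {w. Nv w = n} w \<partial>D) / pN D n"

definition pXN :: "(bool \<times> real \<times> 'n) measure \<Rightarrow> bool \<Rightarrow> 'n \<Rightarrow> real" where
  "pXN D x n = measure D {w \<in> space D. Xv w = x \<and> Nv w = n}"

definition cmean :: "(bool \<times> real \<times> 'n) measure \<Rightarrow> bool \<Rightarrow> 'n \<Rightarrow> real" where
  "cmean D x n = (\<integral>w. Yv w * indicator {w. Xv w = x \<and> Nv w = n} w \<partial>D) / pXN D x n"

definition Ypar :: "(bool \<times> real \<times> 'n) measure \<Rightarrow> bool \<Rightarrow> real" where
  "Ypar D x = (\<integral>w. Yv w * indicator {w. Xv w = x} w \<partial>D)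
              / measure D {w \<in> space D. Xv w = x}"

definition joint_dist :: "real \<Rightarrow> real \<Rightarrow> (bool \<times> real \<times> 'n) measure \<Rightarrow> bool" where
  "joint_dist lo hi D \<longleftrightarrow>
     prob_space D \<and> sets D = sets joint_space \<and> integrable D Yv \<and>
     (\<forall>x n. pXN D x n > 0 \<longrightarrow> lo \<le> cmean D x n \<and> cmean D x n \<le> hi)"

definition same_obs :: "(bool \<times> real \<times> 'n) measure \<Rightarrow> (bool \<times> real \<times> 'n) measure \<Rightarrow> bool" where
  "same_obs D D' \<longleftrightarrow> (\<forall>n. pN D' n = pN D n \<and> XN D' n = XN D n \<and> YN D' n = YN D n)"

definition EN :: "(bool \<times> real \<times> 'n::finite) measure \<Rightarrow> (real \<Rightarrow> real \<Rightarrow> real) \<Rightarrow> real" where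
  "EN D f = (\<Sum>n\<in>UNIV. pN D n * f (XN D n) (YN D n))"

definition EXm :: "(bool \<times> real \<times> 'n::finite) measure \<Rightarrow> real" where
  "EXm D = EN D (\<lambda>a b. a)"

definition Y1_hi :: "real \<Rightarrow> real \<Rightarrow> (bool \<times> real \<times> 'n::finite) measure \<Rightarrow> real" where
  "Y1_hi lo hi D = EN D (\<lambda>a b. min (b - lo * (1 - a)) (hi * a)) / EXm D"
definition Y0_lo :: "real \<Rightarrow> real \<Rightarrow> (bool \<times> real \<times> 'n::finite) measure \<Rightarrow> real" where
  "Y0_lo lo hi D = EN D (\<lambda>a b. max (b - hi * a) (lo * (1 - a))) / (1 - EXm D)"
definition Y1_lo :: "real \<Rightarrow> real \<Rightarrow> (bool \<times> real \<times> 'n::finite) measure \<Rightarrow> real" where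
  "Y1_lo lo hi D = EN D (\<lambda>a b. max (b - hi * (1 - a)) (lo * a)) / EXm D"
definition Y0_hi :: "real \<Rightarrow> real \<Rightarrow> (bool \<times> real \<times> 'n::finite) measure \<Rightarrow> real" where
  "Y0_hi lo hi D = EN D (\<lambda>a b. min (b - lo * a) (hi * (1 - a))) / (1 - EXm D)"

end

theory Submission
  imports Defs
begin
lemma space_js: "space joint_space = UNIV"
  by (simp add: joint_space_def space_pair_measure)
lemma Xv_meas: "Xv \<in> measurable joint_space (count_space UNIV)"
  unfolding joint_space_def Xv_def[abs_def] by simp
lemma Nv_meas: "Nv \<in> measurable joint_space (count_space UNIV)"
  unfolding joint_space_def Nv_def[abs_def] by measurable
lemma Yv_meas: "Yv \<in> borel_measurable joint_space"
  unfolding joint_space_def Yv_def[abs_def] by measurable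
lemma sets_SXN: "{w. Xv w = x \<and> Nv w = n} \<in> sets joint_space"
proof -
  have "{w. Xv w = x \<and> Nv w = n} = (Xv -` {x} \<inter> space joint_space) \<inter> (Nv -` {n} \<inter> space joint_space)"
    by (auto simp: space_js)
  also have "\<dots> \<in> sets joint_space"
    using measurable_sets[OF Xv_meas, of "{x}"] measurable_sets[OF Nv_meas, of "{n}"] by auto
  finally show ?thesis .
qed
lemma sets_SX: "{w. Xv w = x} \<in> sets joint_space"
proof -
  have "{w. Xv w = x} = (Xv -` {x} \<inter> space joint_space)"
    by (auto simp: space_js)
  also have "\<dots> \<in> sets joint_space"
    using measurable_sets[OF Xv_meas, of "{x}"] by auto
  finally show ?thesis .
qed
lemma sets_SN: "{w. Nv w = n} \<in> sets joint_space"
proof -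
  have "{w. Nv w = n} = (Nv -` {n} \<inter> space joint_space)"
    by (auto simp: space_js)
  also have "\<dots> \<in> sets joint_space"
    using measurable_sets[OF Nv_meas, of "{n}"] by auto
  finally show ?thesis .
qed

definition Iy :: "(bool \<times> real \<times> 'n) measure \<Rightarrow> bool \<Rightarrow> 'n \<Rightarrow> real" where
  "Iy D x n = (\<integral>w. Yv w * indicator {w. Xv w = x \<and> Nv w = n} w \<partial>D)"

definition gmap :: "(bool \<Rightarrow> 'n \<Rightarrow> real) \<Rightarrow> bool \<times> real \<times> 'n \<Rightarrow> bool \<times> real \<times> 'n" where
  "gmap m w = (Xv w, m (Xv w) (Nv w), Nv w)"

locale good =
  fixes D :: "(bool \<times> real \<times> 'n::finite) measure"
  assumes ps: "prob_space D" and sD: "sets D = sets joint_space" and iY: "integrable D Yv"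
begin
interpretation prob_space D by (rule ps)
lemma spD: "space D = UNIV"
  using sets_eq_imp_space_eq[OF sD] space_js by simp
lemma SXN: "{w. Xv w = x \<and> Nv w = n} \<in> sets D" using sD sets_SXN by simp
lemma SX: "{w. Xv w = x} \<in> sets D" using sD sets_SX by simp
lemma SN: "{w. Nv w = n} \<in> sets D" using sD sets_SN by simp

lemma pN_split: "pN D n = pXN D True n + pXN D False n"
proof -
  have "{w \<in> space D. Nv w = n} = {w. Xv w = True \<and> Nv w = n} \<union> {w. Xv w = False \<and> Nv w = n}"
    by (auto simp: spD)
  then show ?thesis unfolding pN_def pXN_def spD
    using finite_measure_Union[OF SXN SXN, of True n False n] by auto
qed

lemma pXN_True: "measure D {w \<in> space D. Xv w \<and> Nv w = n} = pXN D True n"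
  by (simp add: pXN_def)

lemma pXN_nonneg: "pXN D x n \<ge> 0" by (simp add: pXN_def)

lemma intY: "integrable D (\<lambda>w. Yv w * indicator A w)" if "A \<in> sets D"
  using integrable_real_mult_indicator[OF that iY] .

lemma YN_split: "(\<integral>w. Yv w * indicator {w. Nv w = n} w \<partial>D) = Iy D True n + Iy D False n"
proof -
  have "(\<lambda>w::bool\<times>real\<times>'n. Yv w * indicator {w. Nv w = n} w) = (\<lambda>w. Yv w * indicator {w. Xv w = True \<and> Nv w = n} w + Yv w * indicator {w. Xv w = False \<and> Nv w = n} w)"
    by (auto simp: indicator_def fun_eq_iff)
  then show ?thesis unfolding Iy_def
    using Bochner_Integration.integral_add[OF intY[OF SXN[of True n]] intY[OF SXN[of False n]]] by simp
qed

lemma Ypar_int: "(\<integral>w. Yv w * indicator {w. Xv w = x} w \<partial>D) = (\<Sum>n\<in>UNIV. Iy D x n)"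
proof -
  have "(\<lambda>w::bool\<times>real\<times>'n. Yv w * indicator {w. Xv w = x} w) = (\<lambda>w. \<Sum>n\<in>UNIV. Yv w * indicator {w. Xv w = x \<and> Nv w = n} w)"
  proof
    fix w :: "bool\<times>real\<times>'n"
    have "(\<Sum>n\<in>UNIV. Yv w * indicator {w. Xv w = x \<and> Nv w = n} w) = (\<Sum>n\<in>UNIV. if Nv w = n then Yv w * indicator {w. Xv w = x} w else 0)"
      by (rule sum.cong) (auto simp: indicator_def)
    also have "\<dots> = Yv w * indicator {w. Xv w = x} w"
      by simp
    finally show "Yv w * indicator {w. Xv w = x} w = (\<Sum>n\<in>UNIV. Yv w * indicator {w. Xv w = x \<and> Nv w = n} w)"
      by (rule sym)
  qed
  then show ?thesis unfolding Iy_def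
    using Bochner_Integration.integral_sum[where I=UNIV and M=D and f="\<lambda>n w. Yv w * indicator {w. Xv w = x \<and> Nv w = n} w"] intY[OF SXN] by simp
qed

lemma PX_sum: "measure D {w \<in> space D. Xv w = x} = (\<Sum>n\<in>UNIV. pXN D x n)"
proof -
  have "{w \<in> space D. Xv w = x} = (\<Union>n\<in>UNIV. {w. Xv w = x \<and> Nv w = n})"
    by (auto simp: spD)
  then show ?thesis unfolding pXN_def spD
    using finite_measure_finite_Union[of UNIV "\<lambda>n. {w. Xv w = x \<and> Nv w = n}"] SXN
    by (auto simp: disjoint_family_on_def)
qed

lemma sum_pN: "(\<Sum>n\<in>UNIV. pN D n) = 1"
proof -
  have "(\<Sum>n\<in>UNIV. pN D n) = measure D {w \<in> space D. Xv w = True} + measure D {w \<in> space D. Xv w = False}"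
    using PX_sum[of True] PX_sum[of False] by (simp add: pN_split sum.distrib)
  also have "\<dots> = measure D ({w. Xv w = True} \<union> {w. Xv w = False})"
    using finite_measure_Union[OF SX[of True] SX[of False]] by (auto simp: spD disjoint_iff)
  also have "{w. Xv w = True} \<union> {w. Xv w = False} = space D" by (auto simp: spD)
  finally show ?thesis by (simp add: prob_space)
qed

lemma Im_bounds:
  assumes "\<forall>x n. pXN D x n > 0 \<longrightarrow> lo \<le> cmean D x n \<and> cmean D x n \<le> hi"
  shows "lo * pXN D x n \<le> Iy D x n \<and> Iy D x n \<le> hi * pXN D x n"
proof (cases "pXN D x n > 0")
  case True
  then have "lo \<le> Iy D x n / pXN D x n" "Iy D x n / pXN D x n \<le> hi"
    using assms unfolding cmean_def Iy_def by auto
  with True show ?thesis by (simp add: field_simps)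
next
  case False
  then have z: "pXN D x n = 0" using pXN_nonneg[of x n] by linarith
  have "{w. Xv w = x \<and> Nv w = n} \<in> null_sets D"
    using z SXN unfolding pXN_def spD by (simp add: null_sets_def emeasure_eq_measure)
  then have "AE w in D. w \<notin> {w. Xv w = x \<and> Nv w = n}" by (rule AE_not_in)
  then have "AE w in D. Yv w * indicator {w. Xv w = x \<and> Nv w = n} w = 0"
    by eventually_elim (simp add: indicator_def)
  then have "Iy D x n = 0" unfolding Iy_def by (rule integral_eq_zero_AE)
  with z show ?thesis by simp
qed

lemma Xm: "Xv \<in> D \<rightarrow>\<^sub>M count_space UNIV"
  using Xv_meas by (subst measurable_cong_sets[OF sD refl])
lemma Nm: "Nv \<in> D \<rightarrow>\<^sub>M count_space UNIV"
  using Nv_meas by (subst measurable_cong_sets[OF sD refl])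


lemma mm: "(\<lambda>w. m (Xv w) (Nv w)) \<in> borel_measurable D"
proof (rule measurable_compose_countable[where g=Xv and f="\<lambda>i w. m i (Nv w)", OF _ Xm])
  fix i
  show "(\<lambda>w. m i (Nv w)) \<in> borel_measurable D"
    by (rule measurable_compose_countable[where g=Nv and f="\<lambda>j w. m i j", OF _ Nm]) simp
qed

lemma gmeas: "gmap m \<in> D \<rightarrow>\<^sub>M joint_space"
  unfolding joint_space_def gmap_def[abs_def]
  by (intro measurable_Pair Xm mm Nm)

lemma g_simps[simp]: "Xv (gmap m w) = Xv w" "Nv (gmap m w) = Nv w" "Yv (gmap m w) = m (Xv w) (Nv w)"
  by (auto simp: gmap_def Xv_def Nv_def Yv_def)

lemma g_pre: "gmap m -` {w. Xv w = x \<and> Nv w = n} \<inter> space D = {w. Xv w = x \<and> Nv w = n}"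
  by (auto simp: gmap_def Xv_def Nv_def spD)

lemma good_distr: "good (distr D joint_space (gmap m))"
proof (rule good.intro)
  show "prob_space (distr D joint_space (gmap m))" by (rule prob_space_distr[OF gmeas])
  show "sets (distr D joint_space (gmap m)) = sets joint_space" by simp
  have "integrable D (\<lambda>w. m (Xv w) (Nv w))"
  proof (rule integrable_const_bound[where B="\<Sum>x\<in>UNIV. \<Sum>n\<in>UNIV. \<bar>m x n\<bar>"])
    show "AE w in D. norm (m (Xv w) (Nv w)) \<le> (\<Sum>x\<in>UNIV. \<Sum>n\<in>UNIV. \<bar>m x n\<bar>)"
    proof (rule AE_I2)
      fix w
      have "\<bar>m (Xv w) (Nv w)\<bar> \<le> (\<Sum>n\<in>UNIV. \<bar>m (Xv w) n\<bar>)"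
        by (rule member_le_sum) auto
      also have "\<dots> \<le> (\<Sum>x\<in>UNIV. \<Sum>n\<in>UNIV. \<bar>m x n\<bar>)"
        by (rule member_le_sum[where f="\<lambda>x. \<Sum>n\<in>UNIV. \<bar>m x n\<bar>"]) (auto intro: sum_nonneg)
      finally show "norm (m (Xv w) (Nv w)) \<le> (\<Sum>x\<in>UNIV. \<Sum>n\<in>UNIV. \<bar>m x n\<bar>)" by simp
    qed
  qed (rule mm)
  then show "integrable (distr D joint_space (gmap m)) Yv"
    by (subst integrable_distr_eq[OF gmeas Yv_meas]) (simp add: gmap_def Yv_def)
qed

lemma pXN_distr: "pXN (distr D joint_space (gmap m)) x n = pXN D x n"
proof -
  have "{w \<in> space (distr D joint_space (gmap m)). Xv w = x \<and> Nv w = n} = {w. Xv w = x \<and> Nv w = n}"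
    by (simp add: space_js)
  then show ?thesis unfolding pXN_def
    using measure_distr[OF gmeas sets_SXN, of m x n] g_pre[of m x n] by (simp add: spD)
qed

lemma Iy_distr: "Iy (distr D joint_space (gmap m)) x n = m x n * pXN D x n"
proof -
  have bm: "(\<lambda>w. Yv w * indicator {w. Xv w = x \<and> Nv w = n} w) \<in> borel_measurable joint_space"
    using Yv_meas sets_SXN by measurable
  have "Iy (distr D joint_space (gmap m)) x n = (\<integral>w. Yv (gmap m w) * indicator {w. Xv w = x \<and> Nv w = n} (gmap m w) \<partial>D)"
    unfolding Iy_def by (rule integral_distr[OF gmeas bm])
  also have "\<dots> = (\<integral>w. m x n * indicator {w. Xv w = x \<and> Nv w = n} w \<partial>D)"
  proof (rule Bochner_Integration.integral_cong[OF refl])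
    fix w
    show "Yv (gmap m w) * indicator {w. Xv w = x \<and> Nv w = n} (gmap m w) = m x n * indicator {w. Xv w = x \<and> Nv w = n} w"
    proof (cases "Xv w = x \<and> Nv w = n")
      case True
      then have e: "Xv w = x" "Nv w = n" by auto
      show ?thesis by (simp add: indicator_def e)
    next
      case False
      then show ?thesis by (simp add: indicator_def)
    qed
  qed
  also have "\<dots> = m x n * pXN D x n"
    by (simp add: pXN_def spD)
  finally show ?thesis .
qed
end

lemma core:
  fixes A I :: "bool \<Rightarrow> 'n::finite \<Rightarrow> real" and x :: bool
  assumes bnd: "\<And>y n. lo * A y n \<le> I y n \<and> I y n \<le> hi * A y n"
    and pos: "(\<Sum>n\<in>UNIV. A x n) > 0"
    and ldef: "\<And>n. l n = max (I x n + I (\<not>x) n - hi * A (\<not>x) n) (lo * A x n)"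
    and udef: "\<And>n. u n = min (I x n + I (\<not>x) n - lo * A (\<not>x) n) (hi * A x n)"
  shows "(\<Sum>n\<in>UNIV. l n)/(\<Sum>n\<in>UNIV. A x n) \<le> (\<Sum>n\<in>UNIV. I x n)/(\<Sum>n\<in>UNIV. A x n)
       \<and> (\<Sum>n\<in>UNIV. I x n)/(\<Sum>n\<in>UNIV. A x n) \<le> (\<Sum>n\<in>UNIV. u n)/(\<Sum>n\<in>UNIV. A x n)" (is ?P1)
    and "v \<in> {(\<Sum>n\<in>UNIV. l n)/(\<Sum>n\<in>UNIV. A x n) .. (\<Sum>n\<in>UNIV. u n)/(\<Sum>n\<in>UNIV. A x n)} \<Longrightarrow>
     \<exists>J. (\<forall>y n. lo * A y n \<le> J y n \<and> J y n \<le> hi * A y n)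
        \<and> (\<forall>n. J True n + J False n = I True n + I False n)
        \<and> (\<Sum>n\<in>UNIV. J x n)/(\<Sum>n\<in>UNIV. A x n) = v"
proof -
  have li: "l n \<le> I x n" for n using bnd[of x n] bnd[of "\<not>x" n] ldef[of n] by auto
  have iu: "I x n \<le> u n" for n using bnd[of x n] bnd[of "\<not>x" n] udef[of n] by auto
  have lu: "l n \<le> u n" for n using li[of n] iu[of n] by linarith
  have sl: "(\<Sum>n\<in>UNIV. l n) \<le> (\<Sum>n\<in>UNIV. I x n)" by (rule sum_mono) (rule li)
  have su: "(\<Sum>n\<in>UNIV. I x n) \<le> (\<Sum>n\<in>UNIV. u n)" by (rule sum_mono) (rule iu)
  show ?P1 using sl su pos by (simp add: divide_right_mono)
  assume v: "v \<in> {(\<Sum>n\<in>UNIV. l n)/(\<Sum>n\<in>UNIV. A x n) .. (\<Sum>n\<in>UNIV. u n)/(\<Sum>n\<in>UNIV. A x n)}"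
  define SA where "SA = (\<Sum>n\<in>UNIV. A x n)"
  define SL where "SL = (\<Sum>n\<in>UNIV. l n)"
  define SU where "SU = (\<Sum>n\<in>UNIV. u n)"
  have SAp: "SA > 0" using pos SA_def by simp
  have vb: "SL \<le> v * SA" "v * SA \<le> SU" using v SAp unfolding SA_def[symmetric] SL_def[symmetric] SU_def[symmetric]
    by (auto simp: field_simps)
  define t where "t = (if SU = SL then 0 else (v * SA - SL) / (SU - SL))"
  have t01: "0 \<le> t" "t \<le> 1" using vb by (auto simp: t_def field_simps)
  have tv: "SL + t * (SU - SL) = v * SA" using vb by (auto simp: t_def field_simps)
  define j where "j n = l n + t * (u n - l n)" for n
  have jl: "l n \<le> j n" for n using lu[of n] t01 by (simp add: j_def)
  have ju: "j n \<le> u n" for n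
  proof -
    have "t * (u n - l n) \<le> 1 * (u n - l n)" using lu[of n] t01 by (intro mult_right_mono) auto
    then show ?thesis by (simp add: j_def)
  qed
  define J where "J y n = (if y = x then j n else I x n + I (\<not>x) n - j n)" for y n
  have Jb: "lo * A y n \<le> J y n \<and> J y n \<le> hi * A y n" for y n
  proof (cases "y = x")
    case True
    then show ?thesis using jl[of n] ju[of n] ldef[of n] udef[of n] by (auto simp: J_def)
  next
    case False
    then have "y = (\<not>x)" by auto
    then show ?thesis using jl[of n] ju[of n] ldef[of n] udef[of n] by (auto simp: J_def)
  qed
  have Js: "J True n + J False n = I True n + I False n" for n
    by (cases x) (auto simp: J_def)
  have "(\<Sum>n\<in>UNIV. J x n) = SL + t * (SU - SL)"
    by (simp add: J_def j_def SL_def SU_def sum.distrib sum_subtractf flip: sum_distrib_left)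
  then have "(\<Sum>n\<in>UNIV. J x n)/(\<Sum>n\<in>UNIV. A x n) = v"
    using tv SAp by (simp add: SA_def[symmetric])
  with Jb Js show "\<exists>J. (\<forall>y n. lo * A y n \<le> J y n \<and> J y n \<le> hi * A y n)
        \<and> (\<forall>n. J True n + J False n = I True n + I False n)
        \<and> (\<Sum>n\<in>UNIV. J x n)/(\<Sum>n\<in>UNIV. A x n) = v" by blast
qed

lemma half:
  fixes D :: "(bool\<times>real\<times>'n::finite) measure"
  assumes jd: "joint_dist lo hi D" and pos: "(\<Sum>n\<in>UNIV. pXN D x n) > 0"
  shows "Ypar D x \<in> {(\<Sum>n\<in>UNIV. max (Iy D x n + Iy D (\<not>x) n - hi * pXN D (\<not>x) n) (lo * pXN D x n)) / (\<Sum>n\<in>UNIV. pXN D x n)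
                    .. (\<Sum>n\<in>UNIV. min (Iy D x n + Iy D (\<not>x) n - lo * pXN D (\<not>x) n) (hi * pXN D x n)) / (\<Sum>n\<in>UNIV. pXN D x n)}
    \<and> (\<forall>v \<in> {(\<Sum>n\<in>UNIV. max (Iy D x n + Iy D (\<not>x) n - hi * pXN D (\<not>x) n) (lo * pXN D x n)) / (\<Sum>n\<in>UNIV. pXN D x n)
                    .. (\<Sum>n\<in>UNIV. min (Iy D x n + Iy D (\<not>x) n - lo * pXN D (\<not>x) n) (hi * pXN D x n)) / (\<Sum>n\<in>UNIV. pXN D x n)}.
         \<exists>D' :: (bool \<times> real \<times> 'n) measure. joint_dist lo hi D' \<and> same_obs D D' \<and> Ypar D' x = v)"
proof -
  have gD: "good D" using jd unfolding joint_dist_def by (simp add: good_def)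
  have cb: "\<forall>x n. pXN D x n > 0 \<longrightarrow> lo \<le> cmean D x n \<and> cmean D x n \<le> hi"
    using jd unfolding joint_dist_def by blast
  have bnd: "\<And>y n. lo * pXN D y n \<le> Iy D y n \<and> Iy D y n \<le> hi * pXN D y n"
    using good.Im_bounds[OF gD cb] by blast
  have Yp: "Ypar E y = (\<Sum>n\<in>UNIV. Iy E y n) / (\<Sum>n\<in>UNIV. pXN E y n)" if gE: "good E" for E :: "(bool\<times>real\<times>'n) measure" and y
    unfolding Ypar_def using good.Ypar_int[OF gE] good.PX_sum[OF gE] by simp
  note C = core[where A="pXN D" and I="Iy D" and x=x and lo=lo and hi=hi, OF bnd pos refl refl]
  show ?thesis
  proof
    show "Ypar D x \<in> {(\<Sum>n\<in>UNIV. max (Iy D x n + Iy D (\<not>x) n - hi * pXN D (\<not>x) n) (lo * pXN D x n)) / (\<Sum>n\<in>UNIV. pXN D x n)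
                    .. (\<Sum>n\<in>UNIV. min (Iy D x n + Iy D (\<not>x) n - lo * pXN D (\<not>x) n) (hi * pXN D x n)) / (\<Sum>n\<in>UNIV. pXN D x n)}"
      using C(1) Yp[OF gD] by simp
  next
    show "\<forall>v \<in> {(\<Sum>n\<in>UNIV. max (Iy D x n + Iy D (\<not>x) n - hi * pXN D (\<not>x) n) (lo * pXN D x n)) / (\<Sum>n\<in>UNIV. pXN D x n)
                    .. (\<Sum>n\<in>UNIV. min (Iy D x n + Iy D (\<not>x) n - lo * pXN D (\<not>x) n) (hi * pXN D x n)) / (\<Sum>n\<in>UNIV. pXN D x n)}.
         \<exists>D' :: (bool \<times> real \<times> 'n) measure. joint_dist lo hi D' \<and> same_obs D D' \<and> Ypar D' x = v"
    proof
      fix v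
      assume v: "v \<in> {(\<Sum>n\<in>UNIV. max (Iy D x n + Iy D (\<not>x) n - hi * pXN D (\<not>x) n) (lo * pXN D x n)) / (\<Sum>n\<in>UNIV. pXN D x n)
                    .. (\<Sum>n\<in>UNIV. min (Iy D x n + Iy D (\<not>x) n - lo * pXN D (\<not>x) n) (hi * pXN D x n)) / (\<Sum>n\<in>UNIV. pXN D x n)}"
      obtain J where Jb: "\<And>y n. lo * pXN D y n \<le> J y n \<and> J y n \<le> hi * pXN D y n"
        and Js: "\<And>n. J True n + J False n = Iy D True n + Iy D False n"
        and Jv: "(\<Sum>n\<in>UNIV. J x n)/(\<Sum>n\<in>UNIV. pXN D x n) = v"
        using C(2)[OF v] by blast
      define m where "m y n = J y n / pXN D y n" for y n
      define D' where "D' = distr D joint_space (gmap m)"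
      have gD': "good D'" unfolding D'_def by (rule good.good_distr[OF gD])
      have pX': "pXN D' y n = pXN D y n" for y n unfolding D'_def by (rule good.pXN_distr[OF gD])
      have IJ: "Iy D' y n = J y n" for y n
      proof -
        have "Iy D' y n = m y n * pXN D y n" unfolding D'_def by (rule good.Iy_distr[OF gD])
        also have "\<dots> = J y n"
        proof (cases "pXN D y n = 0")
          case True
          then show ?thesis using Jb[of y n] by simp
        next
          case False
          then show ?thesis by (simp add: m_def)
        qed
        finally show ?thesis .
      qed
      have jd': "joint_dist lo hi D'"
        unfolding joint_dist_def
      proof (intro conjI allI impI)
        show "prob_space D'" using gD' by (simp add: good_def)
        show "sets D' = sets joint_space" using gD' by (simp add: good_def)
        show "integrable D' Yv" using gD' by (simp add: good_def)
        fix y n assume p: "pXN D' y n > 0"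
        have cm: "cmean D' y n = J y n / pXN D y n"
          using IJ[of y n] pX'[of y n] by (simp add: cmean_def Iy_def)
        show "lo \<le> cmean D' y n" using p Jb[of y n] pX'[of y n] by (simp add: cm pos_le_divide_eq mult.commute)
        show "cmean D' y n \<le> hi" using p Jb[of y n] pX'[of y n] by (simp add: cm pos_divide_le_eq mult.commute)
      qed
      have pN': "pN D' n = pN D n" for n
        using good.pN_split[OF gD'] good.pN_split[OF gD] pX' by simp
      have so: "same_obs D D'"
        unfolding same_obs_def
      proof (intro allI conjI)
        fix n
        show "pN D' n = pN D n" by (rule pN')
        show "XN D' n = XN D n"
          unfolding XN_def using good.pXN_True[OF gD'] good.pXN_True[OF gD] pX' pN' by simp
        show "YN D' n = YN D n"
          unfolding YN_def using good.YN_split[OF gD'] good.YN_split[OF gD] IJ Js pN' by simp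
      qed
      have "Ypar D' x = v" using Yp[OF gD'] IJ pX' Jv by simp
      with jd' so show "\<exists>D' :: (bool \<times> real \<times> 'n) measure. joint_dist lo hi D' \<and> same_obs D D' \<and> Ypar D' x = v"
        by blast
    qed
  qed
qed

lemma lin1: "P \<noteq> (0::real) \<Longrightarrow> P * (s/P - c*(1 - a/P)) = s - c*(P - a)" by (simp add: field_simps)
lemma lin2: "P \<noteq> (0::real) \<Longrightarrow> P * (s/P - c*(a/P)) = s - c*a" by (simp add: field_simps)
lemma lin3: "P \<noteq> (0::real) \<Longrightarrow> P * (c*(a/P)) = c*a" by (simp add: field_simps)
lemma lin4: "P \<noteq> (0::real) \<Longrightarrow> P * (c*(1 - a/P)) = c*(P - a)" by (simp add: field_simps)

lemma min_scale: "(0::real) < P \<Longrightarrow> P * min a b = min (P * a) (P * b)"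
  by (auto simp: min_def)
lemma max_scale: "(0::real) < P \<Longrightarrow> P * max a b = max (P * a) (P * b)"
  by (auto simp: max_def)

lemma EN_conv:
  fixes D :: "(bool\<times>real\<times>'n::finite) measure"
  assumes gD: "good D"
    and bnd: "\<And>y n. lo * pXN D y n \<le> Iy D y n \<and> Iy D y n \<le> hi * pXN D y n"
    and F: "\<And>a b s. 0 < a + b \<Longrightarrow> (a + b) * f (a / (a + b)) (s / (a + b)) = G a b s"
    and Z: "G 0 0 0 = 0"
  shows "EN D f = (\<Sum>n\<in>UNIV. G (pXN D True n) (pXN D False n) (Iy D True n + Iy D False n))"
  unfolding EN_def
proof (rule sum.cong[OF refl])
  fix n
  have XN: "XN D n = pXN D True n / pN D n"
    unfolding XN_def using good.pXN_True[OF gD] by simp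
  have YN: "YN D n = (Iy D True n + Iy D False n) / pN D n"
    unfolding YN_def using good.YN_split[OF gD] by simp
  have P: "pN D n = pXN D True n + pXN D False n" by (rule good.pN_split[OF gD])
  have nn: "pXN D y n \<ge> 0" for y by (rule good.pXN_nonneg[OF gD])
  show "pN D n * f (XN D n) (YN D n) = G (pXN D True n) (pXN D False n) (Iy D True n + Iy D False n)"
  proof (cases "pN D n = 0")
    case True
    then have "pXN D True n = 0" "pXN D False n = 0" using P nn[of True] nn[of False] by linarith+
    moreover then have "Iy D True n = 0" "Iy D False n = 0" using bnd[of True n] bnd[of False n] by auto
    ultimately show ?thesis using True Z by simp
  next
    case False
    then have "0 < pXN D True n + pXN D False n" using P nn[of True] nn[of False] by linarith
    then show ?thesis using F XN YN P by simp
  qed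
qed

theorem proposition2:
  fixes D :: "(bool \<times> real \<times> 'n::finite) measure" and lo hi :: real
  assumes "lo \<le> hi"
    and "joint_dist lo hi D"
    and "\<exists>n. pN D n > 0 \<and> 0 < XN D n \<and> XN D n < 1"
  shows "Ypar D True \<in> {Y1_lo lo hi D .. Y1_hi lo hi D}
       \<and> (\<forall>v \<in> {Y1_lo lo hi D .. Y1_hi lo hi D}.
            \<exists>D' :: (bool \<times> real \<times> 'n) measure.
              joint_dist lo hi D' \<and> same_obs D D' \<and> Ypar D' True = v)
       \<and> Ypar D False \<in> {Y0_lo lo hi D .. Y0_hi lo hi D}
       \<and> (\<forall>v \<in> {Y0_lo lo hi D .. Y0_hi lo hi D}.
            \<exists>D' :: (bool \<times> real \<times> 'n) measure.
              joint_dist lo hi D' \<and> same_obs D D' \<and> Ypar D' False = v)"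
proof -
  have gD: "good D" using assms(2) unfolding joint_dist_def by (simp add: good_def)
  have cb: "\<forall>x n. pXN D x n > 0 \<longrightarrow> lo \<le> cmean D x n \<and> cmean D x n \<le> hi"
    using assms(2) unfolding joint_dist_def by blast
  have bnd: "\<And>y n. lo * pXN D y n \<le> Iy D y n \<and> Iy D y n \<le> hi * pXN D y n"
    using good.Im_bounds[OF gD cb] by blast
  have nn: "pXN D y n \<ge> 0" for y n by (rule good.pXN_nonneg[OF gD])
  obtain n0 where n0: "pN D n0 > 0" "0 < XN D n0" "XN D n0 < 1" using assms(3) by blast
  have P0: "pN D n0 = pXN D True n0 + pXN D False n0" by (rule good.pN_split[OF gD])
  have X0: "XN D n0 = pXN D True n0 / pN D n0"
    unfolding XN_def using good.pXN_True[OF gD] by simp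
  have a0: "pXN D True n0 > 0" using n0 X0 by (simp add: zero_less_divide_iff)
  have b0: "pXN D False n0 > 0"
  proof -
    have "pXN D True n0 < pN D n0" using n0 X0 by (simp add: divide_less_eq)
    then show ?thesis using P0 by linarith
  qed
  have pos: "(\<Sum>n\<in>UNIV. pXN D y n) > 0" for y
  proof -
    have "pXN D y n0 > 0" using a0 b0 by (cases y) auto
    then show ?thesis by (intro sum_pos2[where i=n0]) (auto intro: nn)
  qed
  have EX: "EXm D = (\<Sum>n\<in>UNIV. pXN D True n)"
    unfolding EXm_def by (subst EN_conv[OF gD bnd, where G="\<lambda>a b s. a"]) auto
  have EX0: "1 - EXm D = (\<Sum>n\<in>UNIV. pXN D False n)"
    using good.sum_pN[OF gD] good.pN_split[OF gD] EX by (simp add: sum.distrib)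
  have F1h: "(a + b) * min (s / (a + b) - lo * (1 - a / (a + b))) (hi * (a / (a + b))) = min (s - lo * b) (hi * a)"
    if "0 < a + b" for a b s :: real
  proof -
    have nz: "a + b \<noteq> 0" using that by simp
    show ?thesis unfolding min_scale[OF that] lin1[OF nz] lin3[OF nz] by simp
  qed
  have F1l: "(a + b) * max (s / (a + b) - hi * (1 - a / (a + b))) (lo * (a / (a + b))) = max (s - hi * b) (lo * a)"
    if "0 < a + b" for a b s :: real
  proof -
    have nz: "a + b \<noteq> 0" using that by simp
    show ?thesis unfolding max_scale[OF that] lin1[OF nz] lin3[OF nz] by simp
  qed
  have F0l: "(a + b) * max (s / (a + b) - hi * (a / (a + b))) (lo * (1 - a / (a + b))) = max (s - hi * a) (lo * b)"
    if "0 < a + b" for a b s :: real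
  proof -
    have nz: "a + b \<noteq> 0" using that by simp
    show ?thesis unfolding max_scale[OF that] lin2[OF nz] lin4[OF nz] by simp
  qed
  have F0h: "(a + b) * min (s / (a + b) - lo * (a / (a + b))) (hi * (1 - a / (a + b))) = min (s - lo * a) (hi * b)"
    if "0 < a + b" for a b s :: real
  proof -
    have nz: "a + b \<noteq> 0" using that by simp
    show ?thesis unfolding min_scale[OF that] lin2[OF nz] lin4[OF nz] by simp
  qed
  have EN1h: "EN D (\<lambda>a b. min (b - lo * (1 - a)) (hi * a)) = (\<Sum>n\<in>UNIV. min ((Iy D True n + Iy D False n) - lo * pXN D False n) (hi * pXN D True n))"
    by (rule EN_conv[OF gD bnd, where G="\<lambda>a b s. min (s - lo * b) (hi * a)"]) (erule F1h, simp)
  have EN1l: "EN D (\<lambda>a b. max (b - hi * (1 - a)) (lo * a)) = (\<Sum>n\<in>UNIV. max ((Iy D True n + Iy D False n) - hi * pXN D False n) (lo * pXN D True n))"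
    by (rule EN_conv[OF gD bnd, where G="\<lambda>a b s. max (s - hi * b) (lo * a)"]) (erule F1l, simp)
  have EN0l: "EN D (\<lambda>a b. max (b - hi * a) (lo * (1 - a))) = (\<Sum>n\<in>UNIV. max ((Iy D True n + Iy D False n) - hi * pXN D True n) (lo * pXN D False n))"
    by (rule EN_conv[OF gD bnd, where G="\<lambda>a b s. max (s - hi * a) (lo * b)"]) (erule F0l, simp)
  have EN0h: "EN D (\<lambda>a b. min (b - lo * a) (hi * (1 - a))) = (\<Sum>n\<in>UNIV. min ((Iy D True n + Iy D False n) - lo * pXN D True n) (hi * pXN D False n))"
    by (rule EN_conv[OF gD bnd, where G="\<lambda>a b s. min (s - lo * a) (hi * b)"]) (erule F0h, simp)
  have Y1h: "Y1_hi lo hi D = (\<Sum>n\<in>UNIV. min (Iy D True n + Iy D (\<not>True) n - lo * pXN D (\<not>True) n) (hi * pXN D True n)) / (\<Sum>n\<in>UNIV. pXN D True n)"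
    unfolding Y1_hi_def EX EN1h by simp
  have Y1l: "Y1_lo lo hi D = (\<Sum>n\<in>UNIV. max (Iy D True n + Iy D (\<not>True) n - hi * pXN D (\<not>True) n) (lo * pXN D True n)) / (\<Sum>n\<in>UNIV. pXN D True n)"
    unfolding Y1_lo_def EX EN1l by simp
  have Y0h: "Y0_hi lo hi D = (\<Sum>n\<in>UNIV. min (Iy D False n + Iy D (\<not>False) n - lo * pXN D (\<not>False) n) (hi * pXN D False n)) / (\<Sum>n\<in>UNIV. pXN D False n)"
    unfolding Y0_hi_def EX0 EN0h by (simp add: add.commute)
  have Y0l: "Y0_lo lo hi D = (\<Sum>n\<in>UNIV. max (Iy D False n + Iy D (\<not>False) n - hi * pXN D (\<not>False) n) (lo * pXN D False n)) / (\<Sum>n\<in>UNIV. pXN D False n)"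
    unfolding Y0_lo_def EX0 EN0l by (simp add: add.commute)
  show ?thesis
    using half[OF assms(2) pos[of True]] half[OF assms(2) pos[of False]]
    unfolding Y1h Y1l Y0h Y0l by blast
qed
end
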